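(* Under the standing assumptions below, the operator $P:Y\to Y$ satisfies $P^2=I$.
   Context: $X$ is one of $\ell^p$ ($1\le p\le\infty$), $c$, $c_0$. Standing assumptions: $(a_n)$ strictly decreasing positive reals, $a_n\to0$; $b=(b_n)\in X$ with $b_n>0$ for all $n$; $\pi_n:=2\prod_{m\ge1,\,m\ne n}\frac{1+a_m/a_n}{1-a_m/a_n}$ and $\pi\in\ell^\infty$; $\phi_{ij}:=\frac{b_i/b_j}{1+a_i/a_j}$ satisfies $\phi_{ij}\le C\mu^{|i-j|}$ for some $C>0$, $\mu\in(0,1)$. $Y:=\{(y_n)\mid(b_ny_n)\in X\}$ with $\|y\|_Y:=\|(b_ny_n)\|_X$. $P:Y\to Y$ is $(Py)_n:=\sum_{m=1}^\infty\frac{a_m\pi_my_m}{a_n+a_m}$ (matrix entries $P_{ij}=\frac{a_j\pi_j}{a_i+a_j}$); it is a bounded operator on $Y$. *)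

theory Defs
  imports "HOL-Analysis.Analysis"
begin

text \<open>The ambient sequence space X: one of l^p (1 <= p < inf), l^inf, c, c_0.
  Sequences are indexed from 0 (the paper indexes from 1; this is a harmless shift).\<close>

datatype seqspace = Lp real | Linf | Conv | Conv0

fun valid_seqspace :: "seqspace \<Rightarrow> bool" where
  "valid_seqspace (Lp p) = (1 \<le> p)"
| "valid_seqspace Linf = True"
| "valid_seqspace Conv = True"
| "valid_seqspace Conv0 = True"

fun in_seqspace :: "seqspace \<Rightarrow> (nat \<Rightarrow> real) \<Rightarrow> bool" where
  "in_seqspace (Lp p) x = summable (\<lambda>n. \<bar>x n\<bar> powr p)"
| "in_seqspace Linf x = Bseq x"
| "in_seqspace Conv x = convergent x"
| "in_seqspace Conv0 x = (x \<longlonglongrightarrow> 0)"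

definition pi_factor :: "(nat \<Rightarrow> real) \<Rightarrow> nat \<Rightarrow> nat \<Rightarrow> real" where
  "pi_factor a n m = (if m = n then 1 else (1 + a m / a n) / (1 - a m / a n))"

definition pi_seq :: "(nat \<Rightarrow> real) \<Rightarrow> nat \<Rightarrow> real" where
  "pi_seq a n = 2 * (\<Prod>m. pi_factor a n m)"

definition phi :: "(nat \<Rightarrow> real) \<Rightarrow> (nat \<Rightarrow> real) \<Rightarrow> nat \<Rightarrow> nat \<Rightarrow> real" where
  "phi a b i j = (b i / b j) / (1 + a i / a j)"

definition in_Y :: "seqspace \<Rightarrow> (nat \<Rightarrow> real) \<Rightarrow> (nat \<Rightarrow> real) \<Rightarrow> bool" where
  "in_Y X b y = in_seqspace X (\<lambda>n. b n * y n)"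

definition P_op :: "(nat \<Rightarrow> real) \<Rightarrow> (nat \<Rightarrow> real) \<Rightarrow> nat \<Rightarrow> real" where
  "P_op a y n = (\<Sum>m. a m * pi_seq a m * y m / (a n + a m))"

end

theory Submission
  imports Defs
begin

definition pN :: "(nat\<Rightarrow>real) \<Rightarrow> nat set \<Rightarrow> nat \<Rightarrow> real" where
  "pN a S m = 2 * (\<Prod>j\<in>S-{m}. (a m + a j)/(a m - a j))"

definition RR :: "(nat\<Rightarrow>real) \<Rightarrow> nat set \<Rightarrow> real \<Rightarrow> real" where
  "RR a S z = (\<Prod>j\<in>S. (z + a j)/(z - a j))"

lemma termwise:
  fixes z t c x :: real
  assumes "z \<noteq> t" "z \<noteq> x" "x \<noteq> t"
  shows "(z+t)/(z-t) * (c/(z-x)) = c*(x+t)/((x-t)*(z-x)) + 2*t*c/((z-t)*(t-x))"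
proof -
  have h: "z-t\<noteq>0" "z-x\<noteq>0" "x-t\<noteq>0" "t-x\<noteq>0" using assms by auto
  have h2: "(x-t)*(z-x) \<noteq> 0" "(z-t)*(t-x) \<noteq> 0" "(z-t)*(z-x) \<noteq> 0" using h by auto
  have "(z+t)/(z-t) * (c/(z-x)) = c*(z+t)/((z-t)*(z-x))" by simp
  also have "\<dots> = c*(x+t)/((x-t)*(z-x)) + 2*t*c/((z-t)*(t-x))"
    using h2 h by (simp add: divide_simps) (simp add: algebra_simps)
  finally show ?thesis .
qed

lemma pf_step:
  fixes z t :: real and F :: "nat set"
  assumes fin: "finite F" and zt: "z \<noteq> t" and za: "\<forall>m\<in>F. z \<noteq> a m" and ta: "\<forall>m\<in>F. t \<noteq> a m"
  shows "(z+t)/(z-t) * (1 + (\<Sum>m\<in>F. c m/(z - a m)))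
     = 1 + 2*t*(1 + (\<Sum>m\<in>F. c m/(t - a m)))/(z-t) + (\<Sum>m\<in>F. c m*(a m+t)/((a m - t)*(z - a m)))"
proof -
  have e1: "(z+t)/(z-t) = 1 + 2*t/(z-t)" using zt by (simp add: field_simps)
  have "(z+t)/(z-t) * (\<Sum>m\<in>F. c m/(z - a m)) = (\<Sum>m\<in>F. (z+t)/(z-t) * (c m/(z - a m)))"
    by (simp add: sum_distrib_left)
  also have "\<dots> = (\<Sum>m\<in>F. c m*(a m+t)/((a m - t)*(z - a m)) + 2*t*c m/((z-t)*(t-a m)))"
    by (rule sum.cong[OF refl], rule termwise) (use zt za ta in auto)
  also have "\<dots> = (\<Sum>m\<in>F. c m*(a m+t)/((a m - t)*(z - a m))) + 2*t/(z-t) * (\<Sum>m\<in>F. c m/(t-a m))"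
    by (simp add: sum.distrib sum_distrib_left)
  finally have "(z+t)/(z-t) * (\<Sum>m\<in>F. c m/(z - a m)) = (\<Sum>m\<in>F. c m*(a m+t)/((a m - t)*(z - a m))) + 2*t/(z-t) * (\<Sum>m\<in>F. c m/(t-a m))" .
  moreover have "2*t*(1 + (\<Sum>m\<in>F. c m/(t - a m)))/(z-t) = 2*t/(z-t) + 2*t/(z-t) * (\<Sum>m\<in>F. c m/(t-a m))"
    by (simp add: distrib_left add_divide_distrib)
  ultimately show ?thesis unfolding e1 by (simp add: distrib_left distrib_right)
qed

lemma pf_finite:
  fixes a :: "nat \<Rightarrow> real"
  assumes "finite S"
  shows "inj_on a S \<Longrightarrow> z \<notin> a ` S \<Longrightarrow> RR a S z = 1 + (\<Sum>m\<in>S. a m * pN a S m / (z - a m))"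
  using assms
proof (induction S arbitrary: z rule: finite_induct)
  case empty
  then show ?case by (simp add: RR_def)
next
  case (insert t F)
  have injF: "inj_on a F" using insert by auto
  have taF: "a t \<notin> a ` F" using insert by auto
  have zF: "z \<notin> a ` F" "z \<noteq> a t" using insert by auto
  have IHz: "RR a F z = 1 + (\<Sum>m\<in>F. a m * pN a F m / (z - a m))" using insert injF zF by blast
  have IHt: "RR a F (a t) = 1 + (\<Sum>m\<in>F. a m * pN a F m / (a t - a m))" using insert injF taF by blast
  have L: "RR a (insert t F) z = (z + a t)/(z - a t) * RR a F z"
    using insert by (simp add: RR_def)
  have pt: "pN a (insert t F) t = 2 * RR a F (a t)"
    using insert by (simp add: pN_def RR_def)
  have pm: "pN a (insert t F) m = pN a F m * (a m + a t)/(a m - a t)" if "m \<in> F" for m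
  proof -
    have "insert t F - {m} = insert t (F - {m})" using insert that by auto
    then show ?thesis using insert that by (simp add: pN_def)
  qed
  have "RR a (insert t F) z = 1 + 2*a t*(1 + (\<Sum>m\<in>F. a m * pN a F m/(a t - a m)))/(z-a t)
      + (\<Sum>m\<in>F. a m * pN a F m*(a m+a t)/((a m - a t)*(z - a m)))"
    unfolding L IHz by (rule pf_step) (use insert zF taF in auto)
  also have "\<dots> = 1 + (\<Sum>m\<in>insert t F. a m * pN a (insert t F) m / (z - a m))"
    using insert by (simp add: pt IHt pm algebra_simps)
  finally show ?case .
qed

lemma neg_notin:
  fixes a :: "nat \<Rightarrow> real"
  assumes "\<And>j. j \<in> S \<Longrightarrow> a j > 0" "x > 0"
  shows "- x \<notin> a ` S"
proof
  assume "- x \<in> a ` S"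
  then obtain j where "j \<in> S" "- x = a j" by auto
  with assms show False by force
qed

lemma F1_finite:
  fixes a :: "nat \<Rightarrow> real"
  assumes fin: "finite S" and inj: "inj_on a S" and pos: "\<And>j. j \<in> S \<Longrightarrow> a j > 0" and n: "n \<in> S"
  shows "(\<Sum>m\<in>S. a m * pN a S m / (a n + a m)) = 1"
proof -
  have z: "- a n \<notin> a ` S" by (rule neg_notin) (use pos n in auto)
  have "RR a S (- a n) = 0" unfolding RR_def using fin n by (auto intro!: bexI[of _ n])
  with pf_finite[OF fin inj z] have "0 = 1 + (\<Sum>m\<in>S. a m * pN a S m / (- a n - a m))" by simp
  also have "(\<Sum>m\<in>S. a m * pN a S m / (- a n - a m)) = - (\<Sum>m\<in>S. a m * pN a S m / (a n + a m))"
    unfolding sum_negf[symmetric] by (rule sum.cong) (auto simp: divide_simps algebra_simps)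
  finally show ?thesis by simp
qed

lemma F2_finite:
  fixes a :: "nat \<Rightarrow> real"
  assumes fin: "finite S" and inj: "inj_on a S" and pos: "\<And>j. j \<in> S \<Longrightarrow> a j > 0" and n: "n \<in> S"
  shows "(\<Sum>m\<in>S. a m * pN a S m / (a n + a m)^2) = 1 / (a n * pN a S n)"
proof -
  define S' where "S' = S - {n}"
  define c where "c m = a m * pN a S m" for m
  define T where "T = (\<Sum>m\<in>S. c m / (a n + a m)^2)"
  have finS': "finite S'" "inj_on a S'" using fin inj by (auto simp: S'_def inj_on_subset)
  have an: "a n > 0" using pos n by auto
  have z: "- a n \<notin> a ` S'" by (rule neg_notin) (use pos an in \<open>auto simp: S'_def\<close>)
  have neq: "a m \<noteq> a n" if "m \<in> S'" for m using inj n that unfolding S'_def inj_on_def by blast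
  have pm: "pN a S' m = pN a S m * (a m - a n)/(a m + a n)" if "m \<in> S'" for m
  proof -
    have mS: "m \<in> S" "m \<noteq> n" using that by (auto simp: S'_def)
    have "S - {m} = insert n (S' - {m})" using mS n by (auto simp: S'_def)
    then have "pN a S m = pN a S' m * ((a m + a n)/(a m - a n))"
      using finS' mS by (simp add: pN_def S'_def)
    moreover have "a m + a n > 0" "a m - a n \<noteq> 0" using pos[OF mS(1)] an neq[OF that] by auto
    ultimately show ?thesis by (simp add: divide_simps)
  qed
  have RRp: "RR a S' (- a n) * pN a S n = 2"
  proof -
    have "RR a S' (- a n) * pN a S n = 2 * (\<Prod>j\<in>S'. (- a n + a j)/(- a n - a j) * ((a n + a j)/(a n - a j)))"
      unfolding RR_def pN_def S'_def prod.distrib by (simp only: mult.commute mult.left_commute)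
    also have "\<dots> = 2 * (\<Prod>j\<in>S'. 1)"
    proof (intro arg_cong[where f="\<lambda>x. 2 * x"] prod.cong refl)
      fix j assume j: "j \<in> S'"
      have "a j > 0" "a n - a j \<noteq> 0" "a j - a n \<noteq> 0" using pos j neq[OF j] by (auto simp: S'_def)
      moreover have "- a n - a j \<noteq> 0" using \<open>a j > 0\<close> an by auto
      ultimately show "(- a n + a j)/(- a n - a j) * ((a n + a j)/(a n - a j)) = 1"
        by (simp add: divide_simps) (simp add: algebra_simps)
    qed
    finally show ?thesis by simp
  qed
  have "RR a S' (- a n) = 1 + (\<Sum>m\<in>S'. a m * pN a S' m / (- a n - a m))"
    by (rule pf_finite[OF finS' z])
  also have "(\<Sum>m\<in>S'. a m * pN a S' m / (- a n - a m)) = (\<Sum>m\<in>S'. 2 * a n * (c m / (a n + a m)^2) - c m / (a n + a m))"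
  proof (rule sum.cong[OF refl])
    fix m assume m: "m \<in> S'"
    have "a m > 0" using pos m by (auto simp: S'_def)
    then have h: "a n + a m \<noteq> 0" "- a n - a m \<noteq> 0" "a m + a n \<noteq> 0" using an by auto
    show "a m * pN a S' m / (- a n - a m) = 2 * a n * (c m / (a n + a m)^2) - c m / (a n + a m)"
      unfolding pm[OF m] c_def using h by (simp add: divide_simps power2_eq_square) (simp add: algebra_simps)
  qed
  also have "\<dots> = 2 * a n * (\<Sum>m\<in>S'. c m / (a n + a m)^2) - (\<Sum>m\<in>S'. c m / (a n + a m))"
    by (simp add: sum_subtractf sum_distrib_left)
  also have "(\<Sum>m\<in>S'. c m / (a n + a m)^2) = T - c n / (a n + a n)^2"
    unfolding T_def S'_def using fin n by (simp add: sum_diff1)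
  also have "(\<Sum>m\<in>S'. c m / (a n + a m)) = 1 - c n / (a n + a n)"
    using F1_finite[OF fin inj pos n] unfolding S'_def c_def using fin n by (simp add: sum_diff1)
  finally have eq: "RR a S' (- a n) = 1 + (2 * a n * (T - c n / (a n + a n)\<^sup>2) - (1 - c n / (a n + a n)))" .
  have "2*a n*(c n/(a n + a n)^2) = c n/(a n + a n)" using an by (simp add: power2_eq_square divide_simps)
  with eq have "RR a S' (- a n) = 2 * a n * T" by (simp add: right_diff_distrib)
  with RRp have "2 * a n * T * pN a S n = 2" by simp
  then have e2: "T * (a n * pN a S n) = 1" by (simp add: mult_ac)
  then have "a n * pN a S n \<noteq> 0" by auto
  with e2 have "T = 1 / (a n * pN a S n)" by (simp add: eq_divide_eq)
  then show ?thesis by (simp add: T_def c_def)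
qed

lemma tannery_sums:
  fixes u :: "nat \<Rightarrow> nat \<Rightarrow> real"
  assumes lim: "\<And>m. (\<lambda>N. u m N) \<longlonglongrightarrow> v m"
    and bd: "\<And>m N. \<bar>u m N\<bar> \<le> M m" and sM: "summable M"
    and z: "\<And>m N. N < m \<Longrightarrow> u m N = 0"
    and L: "(\<lambda>N. \<Sum>m\<le>N. u m N) \<longlonglongrightarrow> L"
  shows "v sums L" "summable (\<lambda>m. \<bar>v m\<bar>)"
proof -
  have T: "eventually (\<lambda>N. summable (\<lambda>k. norm (u k N))) sequentially \<and>
           summable (\<lambda>n. norm (v n)) \<and>
           ((\<lambda>N. suminf (\<lambda>k. u k N)) \<longlonglongrightarrow> suminf v)"
    by (rule tannerys_theorem[OF lim _ sM]) (use bd in \<open>auto intro!: always_eventually\<close>)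
  have "suminf (\<lambda>k. u k N) = (\<Sum>m\<le>N. u m N)" for N
    by (rule suminf_finite) (use z in auto)
  with T have "(\<lambda>N. \<Sum>m\<le>N. u m N) \<longlonglongrightarrow> suminf v" by simp
  with L have "suminf v = L" using LIMSEQ_unique by blast
  moreover have "summable v" using T summable_norm_cancel by blast
  ultimately show "v sums L" using summable_sums by blast
  show "summable (\<lambda>m. \<bar>v m\<bar>)" using T by simp
qed

definition dd :: "nat \<Rightarrow> nat \<Rightarrow> nat" where "dd i j = (if i \<le> j then j - i else i - j)"

locale ctx =
  fixes a b :: "nat \<Rightarrow> real" and B Bb C \<mu> :: real
  assumes a_pos: "\<And>n. a n > 0"
    and a_dec: "\<And>n m. n < m \<Longrightarrow> a m < a n"
    and b_pos: "\<And>n. b n > 0"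
    and b_bd: "\<And>n. b n \<le> Bb"
    and pi_conv: "\<And>n. convergent_prod (pi_factor a n)"
    and B: "\<And>n. \<bar>pi_seq a n\<bar> \<le> B"
    and C: "C > 0" and mu: "0 < \<mu>" "\<mu> < 1"
    and phi_bd: "\<And>i j. phi a b i j \<le> C * \<mu> ^ dd i j"
begin

lemma a_inj: "a i = a j \<Longrightarrow> i = j"
  using a_dec by (metis less_irrefl nat_neq_iff)

lemma inj_a: "inj_on a S" using a_inj by (auto simp: inj_on_def)

lemma ratio_bound: "a j / (a i + a j) \<le> C * \<mu> ^ dd i j * b j / b i"
proof -
  have ai: "a i > 0" "a j > 0" "b i > 0" "b j > 0" using a_pos b_pos by auto
  have "phi a b i j = a j / (a i + a j) * b i / b j"
    unfolding phi_def using ai by (simp add: divide_simps)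
  with phi_bd[of i j] have "a j / (a i + a j) * b i / b j \<le> C * \<mu> ^ dd i j" by simp
  then show ?thesis using ai by (simp add: divide_simps mult_ac)
qed

lemma pow_dd: "\<mu> ^ dd i j * \<mu> ^ i \<le> \<mu> ^ j"
proof -
  have "\<mu> ^ (dd i j + i) \<le> \<mu> ^ j" by (rule power_decreasing) (use mu in \<open>auto simp: dd_def\<close>)
  then show ?thesis by (simp add: power_add)
qed

lemma E1: "a j / (a i + a j) \<le> (C * Bb / (b i * \<mu> ^ i)) * \<mu> ^ j"
proof -
  have "a j / (a i + a j) \<le> C * \<mu> ^ dd i j * b j / b i" by (rule ratio_bound)
  also have "\<dots> \<le> C * (\<mu> ^ j / \<mu> ^ i) * Bb / b i"
  proof -
    have "\<mu> ^ dd i j \<le> \<mu> ^ j / \<mu> ^ i" using pow_dd[of i j] mu by (simp add: divide_simps)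
    moreover have "b j \<le> Bb" "b j > 0" by (auto intro: b_bd b_pos)
    ultimately have "\<mu> ^ dd i j * b j \<le> (\<mu> ^ j / \<mu> ^ i) * Bb"
      by (intro mult_mono) (use mu in auto)
    then have "C * (\<mu> ^ dd i j * b j) / b i \<le> C * ((\<mu> ^ j / \<mu> ^ i) * Bb) / b i"
      by (intro divide_right_mono mult_left_mono) (use C b_pos[of i] in auto)
    then show ?thesis by (simp add: mult.assoc)
  qed
  also have "\<dots> = (C * Bb / (b i * \<mu> ^ i)) * \<mu> ^ j" by (simp add: mult_ac)
  finally show ?thesis .
qed

lemma pf_eq: "i \<noteq> m \<Longrightarrow> pi_factor a m i = (a m + a i) / (a m - a i)"
  using a_pos[of m] by (simp add: pi_factor_def divide_simps)

lemma pf_ge1: "\<bar>pi_factor a m i\<bar> \<ge> 1"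
proof (cases "i = m")
  case True then show ?thesis by (simp add: pi_factor_def)
next
  case False
  have "a i \<noteq> a m" using a_inj False by blast
  then have h: "\<bar>a m - a i\<bar> > 0" by simp
  have "\<bar>a m - a i\<bar> \<le> \<bar>a m + a i\<bar>" using a_pos[of m] a_pos[of i] by simp
  then show ?thesis using h by (simp add: pf_eq[OF False] abs_divide le_divide_eq)
qed

lemma pN_rho: "m \<le> N \<Longrightarrow> pN a {..N} m = 2 * (\<Prod>i\<le>N. pi_factor a m i)"
proof -
  assume m: "m \<le> N"
  have "(\<Prod>i\<le>N. pi_factor a m i) = pi_factor a m m * (\<Prod>i\<in>{..N}-{m}. pi_factor a m i)"
    by (rule prod.remove) (use m in auto)
  also have "\<dots> = (\<Prod>i\<in>{..N}-{m}. (a m + a i) / (a m - a i))"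
    by (simp add: pi_factor_def[of a m m], intro prod.cong) (auto simp: pf_eq)
  finally show ?thesis by (simp add: pN_def)
qed

lemma rho_lim: "(\<lambda>N. 2 * (\<Prod>i\<le>N. pi_factor a m i)) \<longlonglongrightarrow> pi_seq a m"
  unfolding pi_seq_def by (intro tendsto_mult tendsto_const convergent_prod_LIMSEQ pi_conv)

lemma rho_bound: "\<bar>2 * (\<Prod>i\<le>N. pi_factor a m i)\<bar> \<le> \<bar>pi_seq a m\<bar>"
proof -
  have "incseq (\<lambda>N. \<bar>2 * (\<Prod>i\<le>N. pi_factor a m i)\<bar>)"
  proof (rule incseq_SucI)
    fix N
    have "\<bar>2 * (\<Prod>i\<le>N. pi_factor a m i)\<bar> * 1 \<le> \<bar>2 * (\<Prod>i\<le>N. pi_factor a m i)\<bar> * \<bar>pi_factor a m (Suc N)\<bar>"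
      by (intro mult_left_mono pf_ge1) auto
    then show "\<bar>2 * (\<Prod>i\<le>N. pi_factor a m i)\<bar> \<le> \<bar>2 * (\<Prod>i\<le>Suc N. pi_factor a m i)\<bar>"
      by (simp add: abs_mult atMost_Suc mult_ac)
  qed
  moreover have "(\<lambda>N. \<bar>2 * (\<Prod>i\<le>N. pi_factor a m i)\<bar>) \<longlonglongrightarrow> \<bar>pi_seq a m\<bar>"
    by (intro tendsto_rabs rho_lim)
  ultimately show ?thesis by (rule incseq_le)
qed

lemma pi_nz: "pi_seq a m \<noteq> 0"
proof -
  have "pi_factor a m i \<noteq> 0" for i using pf_ge1[of m i] by auto
  then have "prodinf (pi_factor a m) \<noteq> 0" by (intro prodinf_nonzero pi_conv) auto
  then show ?thesis by (simp add: pi_seq_def)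
qed

lemma B_nonneg: "0 \<le> B" using B[of 0] by linarith

lemma entry_bound: "\<bar>a m * pi_seq a m / (a n + a m)\<bar> \<le> B * (C * Bb / (b n * \<mu> ^ n)) * \<mu> ^ m"
proof -
  have "\<bar>a m * pi_seq a m / (a n + a m)\<bar> = \<bar>pi_seq a m\<bar> * (a m / (a n + a m))"
    using a_pos[of m] a_pos[of n] by (simp add: abs_mult abs_divide)
  also have "\<dots> \<le> B * ((C * Bb / (b n * \<mu> ^ n)) * \<mu> ^ m)"
    by (intro mult_mono B E1) (use a_pos[of m] a_pos[of n] B_nonneg in auto)
  finally show ?thesis by (simp add: mult_ac)
qed

lemma summable_geo_bound: "summable (\<lambda>m. K * \<mu> ^ m)"
  using mu by (intro summable_mult summable_geometric) auto

lemma F1_inf: "(\<lambda>m. a m * pi_seq a m / (a n + a m)) sums 1"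
proof (rule tannery_sums(1)[where u="\<lambda>m N. if m \<le> N then a m * (2 * (\<Prod>i\<le>N. pi_factor a m i)) / (a n + a m) else 0"])
  fix m
  show "(\<lambda>N. if m \<le> N then a m * (2 * (\<Prod>i\<le>N. pi_factor a m i)) / (a n + a m) else 0)
     \<longlonglongrightarrow> a m * pi_seq a m / (a n + a m)"
  proof (rule Lim_transform_eventually)
    show "(\<lambda>N. a m * (2 * (\<Prod>i\<le>N. pi_factor a m i)) / (a n + a m)) \<longlonglongrightarrow> a m * pi_seq a m / (a n + a m)"
      using a_pos[of m] a_pos[of n] by (intro tendsto_intros rho_lim) auto
    show "\<forall>\<^sub>F N in sequentially. a m * (2 * (\<Prod>i\<le>N. pi_factor a m i)) / (a n + a m) =
        (if m \<le> N then a m * (2 * (\<Prod>i\<le>N. pi_factor a m i)) / (a n + a m) else 0)"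
      using eventually_ge_at_top[of m] by eventually_elim auto
  qed
next
  fix m N
  show "\<bar>if m \<le> N then a m * (2 * (\<Prod>i\<le>N. pi_factor a m i)) / (a n + a m) else 0\<bar> \<le> B * (C * Bb / (b n * \<mu> ^ n)) * \<mu> ^ m"
  proof -
    have "\<bar>a m * (2 * (\<Prod>i\<le>N. pi_factor a m i)) / (a n + a m)\<bar> \<le> \<bar>a m * pi_seq a m / (a n + a m)\<bar>"
      using a_pos[of m] a_pos[of n] rho_bound[of m N]
      by (simp add: abs_mult abs_divide divide_right_mono mult_left_mono)
    also note entry_bound
    finally show ?thesis using order_trans[OF abs_ge_zero entry_bound[of m n]] by auto
  qed
next
  show "summable (\<lambda>m. B * (C * Bb / (b n * \<mu> ^ n)) * \<mu> ^ m)" by (rule summable_geo_bound)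
next
  fix m N :: nat assume "N < m" then show "(if m \<le> N then a m * (2 * (\<Prod>i\<le>N. pi_factor a m i)) / (a n + a m) else 0) = 0" by auto
next
  have "(\<Sum>m\<le>N. if m \<le> N then a m * (2 * (\<Prod>i\<le>N. pi_factor a m i)) / (a n + a m) else 0) = 1" if "n \<le> N" for N
  proof -
    have "(\<Sum>m\<le>N. if m \<le> N then a m * (2 * (\<Prod>i\<le>N. pi_factor a m i)) / (a n + a m) else 0)
       = (\<Sum>m\<le>N. a m * pN a {..N} m / (a n + a m))"
      by (intro sum.cong) (auto simp: pN_rho)
    also have "\<dots> = 1" by (rule F1_finite) (use that a_pos inj_a in auto)
    finally show ?thesis .
  qed
  then show "(\<lambda>N. \<Sum>m\<le>N. if m \<le> N then a m * (2 * (\<Prod>i\<le>N. pi_factor a m i)) / (a n + a m) else 0) \<longlonglongrightarrow> 1"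
    by (intro tendsto_eventually) (use eventually_ge_at_top[of n] in \<open>eventually_elim, auto\<close>)
qed

lemma F2_inf: "(\<lambda>m. a m * pi_seq a m / (a n + a m)^2) sums (1 / (a n * pi_seq a n))"
proof (rule tannery_sums(1)[where u="\<lambda>m N. if m \<le> N then a m * (2 * (\<Prod>i\<le>N. pi_factor a m i)) / (a n + a m)^2 else 0"
     and M = "\<lambda>m. (1 / a n) * (B * (C * Bb / (b n * \<mu> ^ n))) * \<mu> ^ m"])
  fix m
  show "(\<lambda>N. if m \<le> N then a m * (2 * (\<Prod>i\<le>N. pi_factor a m i)) / (a n + a m)^2 else 0)
     \<longlonglongrightarrow> a m * pi_seq a m / (a n + a m)^2"
  proof (rule Lim_transform_eventually)
    show "(\<lambda>N. a m * (2 * (\<Prod>i\<le>N. pi_factor a m i)) / (a n + a m)^2) \<longlonglongrightarrow> a m * pi_seq a m / (a n + a m)^2"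
      using a_pos[of m] a_pos[of n] by (intro tendsto_intros rho_lim) auto
    show "\<forall>\<^sub>F N in sequentially. a m * (2 * (\<Prod>i\<le>N. pi_factor a m i)) / (a n + a m)^2 =
        (if m \<le> N then a m * (2 * (\<Prod>i\<le>N. pi_factor a m i)) / (a n + a m)^2 else 0)"
      using eventually_ge_at_top[of m] by eventually_elim auto
  qed
next
  fix m N
  have an: "a n > 0" "a m > 0" using a_pos by auto
  have "\<bar>a m * (2 * (\<Prod>i\<le>N. pi_factor a m i)) / (a n + a m)^2\<bar> \<le> \<bar>a m * pi_seq a m / (a n + a m)^2\<bar>"
    using an rho_bound[of m N]
    by (simp add: abs_mult abs_divide divide_right_mono mult_left_mono)
  also have "\<dots> = (1 / (a n + a m)) * \<bar>a m * pi_seq a m / (a n + a m)\<bar>"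
    using an by (simp add: abs_mult abs_divide power2_eq_square)
  also have "\<dots> \<le> (1 / a n) * (B * (C * Bb / (b n * \<mu> ^ n)) * \<mu> ^ m)"
    by (intro mult_mono entry_bound) (use an in \<open>auto simp: divide_simps\<close>)
  finally show "\<bar>if m \<le> N then a m * (2 * (\<Prod>i\<le>N. pi_factor a m i)) / (a n + a m)^2 else 0\<bar>
     \<le> (1 / a n) * (B * (C * Bb / (b n * \<mu> ^ n))) * \<mu> ^ m"
    using mult_nonneg_nonneg[OF _ order_trans[OF abs_ge_zero entry_bound[of m n]], of "1 / a n"] an by (auto simp: mult.assoc)
next
  show "summable (\<lambda>m. (1 / a n) * (B * (C * Bb / (b n * \<mu> ^ n))) * \<mu> ^ m)" by (rule summable_geo_bound)
next
  fix m N :: nat assume "N < m" then show "(if m \<le> N then a m * (2 * (\<Prod>i\<le>N. pi_factor a m i)) / (a n + a m)^2 else 0) = 0" by auto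
next
  have "(\<Sum>m\<le>N. if m \<le> N then a m * (2 * (\<Prod>i\<le>N. pi_factor a m i)) / (a n + a m)^2 else 0)
      = 1 / (a n * (2 * (\<Prod>i\<le>N. pi_factor a n i)))" if "n \<le> N" for N
  proof -
    have "(\<Sum>m\<le>N. if m \<le> N then a m * (2 * (\<Prod>i\<le>N. pi_factor a m i)) / (a n + a m)^2 else 0)
       = (\<Sum>m\<le>N. a m * pN a {..N} m / (a n + a m)^2)"
      by (intro sum.cong) (auto simp: pN_rho)
    also have "\<dots> = 1 / (a n * pN a {..N} n)" by (rule F2_finite) (use that a_pos inj_a in auto)
    finally show ?thesis using that by (simp add: pN_rho)
  qed
  note eq = this
  have lim: "(\<lambda>N. 1 / (a n * (2 * (\<Prod>i\<le>N. pi_factor a n i)))) \<longlonglongrightarrow> 1 / (a n * pi_seq a n)"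
    using a_pos[of n] pi_nz[of n] by (intro tendsto_intros rho_lim) auto
  show "(\<lambda>N. \<Sum>m\<le>N. if m \<le> N then a m * (2 * (\<Prod>i\<le>N. pi_factor a m i)) / (a n + a m)^2 else 0) \<longlonglongrightarrow> 1 / (a n * pi_seq a n)"
  proof (rule Lim_transform_eventually[OF lim])
    show "\<forall>\<^sub>F N in sequentially. 1 / (a n * (2 * (\<Prod>i\<le>N. pi_factor a n i))) = (\<Sum>m\<le>N. if m \<le> N then a m * (2 * (\<Prod>i\<le>N. pi_factor a m i)) / (a n + a m)^2 else 0)"
      using eventually_ge_at_top[of n] by eventually_elim (use eq in auto)
  qed
qed

definition Pm :: "nat \<Rightarrow> nat \<Rightarrow> real" where "Pm i j = a j * pi_seq a j / (a i + a j)"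

lemma E_same: "(\<lambda>m. Pm n m * Pm m n) sums 1"
proof -
  have "(\<lambda>m. (a n * pi_seq a n) * (a m * pi_seq a m / (a n + a m)^2)) sums ((a n * pi_seq a n) * (1 / (a n * pi_seq a n)))"
    by (intro sums_mult F2_inf)
  moreover have "(a n * pi_seq a n) * (1 / (a n * pi_seq a n)) = 1" using a_pos[of n] pi_nz[of n] by simp
  moreover have "Pm n m * Pm m n = (a n * pi_seq a n) * (a m * pi_seq a m / (a n + a m)^2)" for m
    by (simp add: Pm_def power2_eq_square add.commute)
  ultimately show ?thesis by simp
qed

lemma E_diff: assumes "n \<noteq> k" shows "(\<lambda>m. Pm n m * Pm m k) sums 0"
proof -
  have ne: "a k - a n \<noteq> 0" using a_inj assms by force
  have "(\<lambda>m. (a k * pi_seq a k / (a k - a n)) * (a m * pi_seq a m / (a n + a m) - a m * pi_seq a m / (a k + a m))) sums ((a k * pi_seq a k / (a k - a n)) * (1 - 1))"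
    by (intro sums_mult sums_diff F1_inf)
  moreover have "Pm n m * Pm m k = (a k * pi_seq a k / (a k - a n)) * (a m * pi_seq a m / (a n + a m) - a m * pi_seq a m / (a k + a m))" for m
  proof -
    have "a n + a m > 0" "a k + a m > 0" "a m + a k > 0" using a_pos[of n] a_pos[of m] a_pos[of k] by auto
    then show ?thesis using ne by (simp add: Pm_def divide_simps) (simp add: algebra_simps)
  qed
  ultimately show ?thesis by simp
qed

lemma Pm_bound: "\<bar>Pm i j\<bar> \<le> B * C * \<mu> ^ dd i j * b j / b i"
proof -
  have "\<bar>Pm i j\<bar> = \<bar>pi_seq a j\<bar> * (a j / (a i + a j))"
    using a_pos[of i] a_pos[of j] by (simp add: Pm_def abs_mult abs_divide)
  also have "\<dots> \<le> B * (C * \<mu> ^ dd i j * b j / b i)"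
    by (intro mult_mono B ratio_bound) (use a_pos[of i] a_pos[of j] B_nonneg in auto)
  finally show ?thesis by (simp add: mult_ac)
qed

lemma dd_ineq: "m + k \<le> 2 * (dd n m + dd m k) + 2 * n"
  by (simp add: dd_def; arith)

lemma mu_dd2: "\<mu> ^ dd n m * \<mu> ^ dd m k \<le> sqrt \<mu> ^ m * sqrt \<mu> ^ k / sqrt \<mu> ^ (2*n)"
proof -
  define \<nu> where "\<nu> = sqrt \<mu>"
  have nu: "0 < \<nu>" "\<nu> \<le> 1" "\<nu>^2 = \<mu>" using mu by (auto simp: \<nu>_def)
  have "\<mu> ^ dd n m * \<mu> ^ dd m k = \<nu> ^ (2 * (dd n m + dd m k))"
    by (simp add: nu(3)[symmetric] power_mult[symmetric] power_add)
  moreover have "\<nu> ^ (2 * (dd n m + dd m k) + 2 * n) \<le> \<nu> ^ (m + k)"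
    by (rule power_decreasing[OF dd_ineq]) (use nu in auto)
  ultimately have "\<mu> ^ dd n m * \<mu> ^ dd m k * \<nu> ^ (2*n) \<le> \<nu> ^ m * \<nu> ^ k"
    by (simp add: power_add)
  then show ?thesis using nu by (simp add: \<nu>_def divide_simps)
qed

lemma main:
  assumes Z: "\<And>k. \<bar>b k * y k\<bar> \<le> Z"
  shows "(\<lambda>m. Pm n m * P_op a y m) sums y n"
proof -
  define \<nu> where "\<nu> = sqrt \<mu>"
  have nu: "0 < \<nu>" "\<nu> < 1" using mu by (auto simp: \<nu>_def)
  define K where "K = B * C * (B * C * Z) / b n / \<nu> ^ (2*n)"
  define F where "F = (\<lambda>(m,k). Pm n m * (Pm m k * y k))"
  have Z0: "0 \<le> Z" using Z[of 0] by linarith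
  have K0: "0 \<le> K" using B_nonneg C Z0 b_pos[of n] nu by (simp add: K_def)
  have row_bd: "\<bar>Pm m k * y k\<bar> \<le> B * C * Z * \<mu> ^ dd m k / b m" for m k
  proof -
    have "\<bar>Pm m k * y k\<bar> = \<bar>Pm m k\<bar> * \<bar>y k\<bar>" by (simp add: abs_mult)
    also have "\<dots> \<le> (B * C * \<mu> ^ dd m k * b k / b m) * \<bar>y k\<bar>"
      by (intro mult_right_mono Pm_bound) auto
    also have "\<dots> = B * C * \<mu> ^ dd m k * \<bar>b k * y k\<bar> / b m"
      using b_pos[of k] by (simp add: abs_mult)
    also have "\<dots> \<le> B * C * \<mu> ^ dd m k * Z / b m"
      by (intro divide_right_mono mult_left_mono Z) (use B_nonneg C mu b_pos[of m] in auto)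
    finally show ?thesis by (simp add: mult_ac)
  qed
  have Fbd: "\<bar>F (m,k)\<bar> \<le> K * (\<nu> ^ m * \<nu> ^ k)" for m k
  proof -
    have "\<bar>F (m,k)\<bar> = \<bar>Pm n m\<bar> * \<bar>Pm m k * y k\<bar>" by (simp add: F_def abs_mult)
    also have "\<dots> \<le> (B * C * \<mu> ^ dd n m * b m / b n) * (B * C * Z * \<mu> ^ dd m k / b m)"
      by (intro mult_mono Pm_bound row_bd) (use order_trans[OF abs_ge_zero Pm_bound[of n m]] in auto)
    also have "\<dots> = (B * C * (B * C * Z) / b n) * (\<mu> ^ dd n m * \<mu> ^ dd m k)"
      using b_pos[of m] by (simp add: field_simps)
    also have "\<dots> \<le> (B * C * (B * C * Z) / b n) * (\<nu> ^ m * \<nu> ^ k / \<nu> ^ (2*n))"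
      by (intro mult_left_mono) (use mu_dd2 B_nonneg C Z0 b_pos[of n] in \<open>auto simp: \<nu>_def\<close>)
    also have "\<dots> = K * (\<nu> ^ m * \<nu> ^ k)" by (simp add: K_def)
    finally show ?thesis .
  qed
  have geo: "(\<lambda>k. c * \<nu> ^ k) summable_on UNIV" for c
  proof -
    have "summable (\<lambda>k. norm (c * \<nu> ^ k))" using nu
      by (simp add: abs_mult power_abs)
    then show ?thesis by (rule norm_summable_imp_summable_on)
  qed
  have G: "(\<lambda>x. norm ((\<lambda>(m,k). \<nu> ^ m * \<nu> ^ k) x)) summable_on (UNIV \<times> UNIV)"
  proof -
    have "(\<lambda>x. norm ((\<lambda>(m,k). \<nu> ^ m * \<nu> ^ k) x)) summable_on Sigma UNIV (\<lambda>_. UNIV)"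
    proof (rule Infinite_Sum.abs_summable_on_Sigma_iff[THEN iffD2], intro conjI ballI)
      fix m :: nat
      show "(\<lambda>x. norm ((\<lambda>k. (\<lambda>(m,k). \<nu> ^ m * \<nu> ^ k) (m, k)) x)) summable_on UNIV"
        using geo[of "\<nu>^m"] nu by (simp add: abs_mult power_abs)
    next
      have "(\<lambda>m. (\<Sum>\<^sub>\<infinity>k. \<nu> ^ k) * \<nu> ^ m) summable_on UNIV" by (rule geo)
      moreover have "(\<Sum>\<^sub>\<infinity>k\<in>UNIV. norm ((\<lambda>(m,k). \<nu> ^ m * \<nu> ^ k) (m, k))) = (\<Sum>\<^sub>\<infinity>k. \<nu> ^ k) * \<nu> ^ m" for m
        using nu by (simp add: abs_mult power_abs infsum_cmult_left' mult.commute[of "\<nu> ^ m"])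
      moreover have "0 \<le> (\<Sum>\<^sub>\<infinity>k. \<nu> ^ k)" using nu by (intro infsum_nonneg) auto
      ultimately show "(\<lambda>x. norm ((\<lambda>m. \<Sum>\<^sub>\<infinity>k\<in>UNIV. norm ((\<lambda>(m,k). \<nu> ^ m * \<nu> ^ k) (m, k))) x)) summable_on UNIV"
        using nu by simp
    qed
    then show ?thesis by simp
  qed
  have Fs: "F summable_on (UNIV \<times> UNIV)"
  proof (rule Infinite_Sum.abs_summable_summable, rule Infinite_Sum.abs_summable_on_comparison_test)
    show "(\<lambda>x. norm ((\<lambda>(m,k). K * (\<nu> ^ m * \<nu> ^ k)) x)) summable_on UNIV \<times> UNIV"
      using summable_on_cmult_right[OF G, of K] K0 nu by (simp add: case_prod_unfold abs_mult)
    fix x :: "nat \<times> nat" show "norm (F x) \<le> norm ((\<lambda>(m,k). K * (\<nu> ^ m * \<nu> ^ k)) x)"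
      using Fbd[of "fst x" "snd x"] K0 nu by (cases x) (simp add: abs_mult)
  qed
  define S where "S = infsum F (UNIV \<times> UNIV)"
  have FS: "(F has_sum S) (UNIV \<times> UNIV)" using Fs by (simp add: S_def)
  have Pnz: "Pm n m \<noteq> 0" for m
    using pi_nz[of m] a_pos[of m] a_pos[of n] by (simp add: Pm_def)
  have rows: "((\<lambda>k. F (m,k)) has_sum (Pm n m * P_op a y m)) UNIV" for m
  proof -
    have "(\<lambda>k. F (m,k)) summable_on UNIV"
      using summable_on_SigmaD1[of "\<lambda>m k. F (m,k)" UNIV "\<lambda>_. UNIV" m] Fs by simp
    then have "(\<lambda>k. Pm m k * y k) summable_on UNIV"
      using summable_on_cmult_right'[OF Pnz[of m], of "\<lambda>k. Pm m k * y k" UNIV] by (simp add: F_def)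
    then have hs: "((\<lambda>k. Pm m k * y k) has_sum infsum (\<lambda>k. Pm m k * y k) UNIV) UNIV" by simp
    then have "(\<lambda>k. Pm m k * y k) sums infsum (\<lambda>k. Pm m k * y k) UNIV" by (rule has_sum_imp_sums)
    then have "P_op a y m = infsum (\<lambda>k. Pm m k * y k) UNIV"
      unfolding P_op_def by (simp add: sums_iff Pm_def)
    then show ?thesis using has_sum_cmult_right[OF hs, of "Pm n m"] by (simp add: F_def)
  qed
  have "((\<lambda>m. Pm n m * P_op a y m) has_sum S) UNIV"
    by (rule has_sum_SigmaD[OF FS]) (use rows in simp)
  then have s1: "(\<lambda>m. Pm n m * P_op a y m) sums S" by (rule has_sum_imp_sums)
  define F' where "F' = (\<lambda>(k,m). F (m,k))"
  have F'S: "(F' has_sum S) (UNIV \<times> UNIV)"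
  proof -
    have "((\<lambda>(x,y). F (y,x)) has_sum S) (UNIV \<times> UNIV)" using FS by (simp only: has_sum_swap[symmetric])
    moreover have "(\<lambda>(x,y). F (y,x)) = F'" by (rule ext) (simp add: F'_def case_prod_unfold)
    ultimately show ?thesis by simp
  qed
  have cols: "((\<lambda>m. F' (k,m)) has_sum (if k = n then y n else 0)) UNIV" for k
  proof -
    have "(\<lambda>m. F' (k,m)) summable_on UNIV"
      using summable_on_SigmaD1[of "\<lambda>k m. F' (k,m)" UNIV "\<lambda>_. UNIV" k] F'S
      by (simp add: summable_on_def) blast
    then have "(\<lambda>m. F' (k,m)) sums infsum (\<lambda>m. F' (k,m)) UNIV"
      by (intro has_sum_imp_sums) simp
    moreover have "(\<lambda>m. F' (k,m)) sums (if k = n then y n else 0)"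
    proof -
      have eqF: "(\<lambda>m. F' (k,m)) = (\<lambda>m. Pm n m * Pm m k * y k)"
        by (rule ext) (simp add: F'_def F_def mult.assoc)
      show ?thesis
      proof (cases "k = n")
        case True
        then show ?thesis using sums_mult2[OF E_same[of n], of "y n"] unfolding eqF by simp
      next
        case False
        then show ?thesis using sums_mult2[OF E_diff[of n k], of "y k"] unfolding eqF by simp
      qed
    qed
    ultimately have "infsum (\<lambda>m. F' (k,m)) UNIV = (if k = n then y n else 0)" by (rule sums_unique2)
    moreover have "((\<lambda>m. F' (k,m)) has_sum infsum (\<lambda>m. F' (k,m)) UNIV) UNIV"
      using \<open>(\<lambda>m. F' (k,m)) summable_on UNIV\<close> by (rule has_sum_infsum)
    ultimately show ?thesis by simp
  qed
  have "((\<lambda>k. if k = n then y n else 0) has_sum S) UNIV"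
    by (rule has_sum_SigmaD[OF F'S]) (use cols in simp)
  then have "(\<lambda>k. if k = n then y n else 0) sums S" by (rule has_sum_imp_sums)
  moreover have "(\<lambda>k. if k = n then y n else 0) sums y n" by (rule sums_single)
  ultimately have "S = y n" using sums_unique2 by blast
  with s1 show ?thesis by simp
qed

end


lemma seq_bdd:
  assumes X: "valid_seqspace X" and x: "in_seqspace X x"
  shows "\<exists>Z. \<forall>k. \<bar>x k\<bar> \<le> Z"
proof -
  have "Bseq x"
  proof (cases X)
    case (Lp p)
    with X x have p: "1 \<le> p" and s: "summable (\<lambda>n. \<bar>x n\<bar> powr p)" by auto
    have "(\<lambda>n. \<bar>x n\<bar> powr p) \<longlonglongrightarrow> 0" by (rule summable_LIMSEQ_zero[OF s])
    then have "eventually (\<lambda>n. \<bar>x n\<bar> powr p < 1) sequentially"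
      by (rule order_tendstoD) simp
    then have "eventually (\<lambda>n. norm (x n) \<le> 1) sequentially"
    proof eventually_elim
      case (elim n)
      show ?case
      proof (rule ccontr)
        assume "\<not> norm (x n) \<le> 1"
        then have "1 \<le> \<bar>x n\<bar>" by simp
        then have "1 powr p \<le> \<bar>x n\<bar> powr p" by (intro powr_mono2) (use p in auto)
        with elim show False by simp
      qed
    qed
    then show ?thesis unfolding Bseq_def[symmetric] by (rule BfunI)
  next
    case Linf with x show ?thesis by simp
  next
    case Conv with x show ?thesis by (simp add: convergent_imp_Bseq)
  next
    case Conv0 with x show ?thesis by (auto intro: convergent_imp_Bseq convergentI)
  qed
  then show ?thesis by (metis BseqE real_norm_def)
qed

theorem proposition5:
  fixes X :: seqspace and a b :: "nat \<Rightarrow> real"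
  assumes X: "valid_seqspace X"
    and a_pos: "\<And>n. a n > 0"
    and a_dec: "\<And>n m. n < m \<Longrightarrow> a m < a n"
    and a_lim: "a \<longlonglongrightarrow> 0"
    and b_in: "in_seqspace X b"
    and b_pos: "\<And>n. b n > 0"
    and pi_conv: "\<And>n. convergent_prod (pi_factor a n)"
    and pi_bdd: "Bseq (pi_seq a)"
    and phi_bound: "\<exists>C \<mu>. C > 0 \<and> 0 < \<mu> \<and> \<mu> < 1 \<and>
        (\<forall>i j. phi a b i j \<le> C * \<mu> ^ (if i \<le> j then j - i else i - j))"
  shows "\<forall>y. in_Y X b y \<longrightarrow>
           (\<forall>n. (\<lambda>m. a m * pi_seq a m * P_op a y m / (a n + a m)) sums y n)"
proof (intro allI impI)
  fix y n assume y: "in_Y X b y"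
  obtain C \<mu> where C: "C > 0" "0 < \<mu>" "\<mu> < 1" and ph: "\<And>i j. phi a b i j \<le> C * \<mu> ^ dd i j"
    using phi_bound unfolding dd_def by blast
  obtain Bb where Bb: "\<And>k. \<bar>b k\<bar> \<le> Bb" using seq_bdd[OF X b_in] by blast
  obtain B where B: "\<And>k. \<bar>pi_seq a k\<bar> \<le> B" using pi_bdd by (metis BseqE real_norm_def)
  obtain Z where Z: "\<And>k. \<bar>b k * y k\<bar> \<le> Z" using seq_bdd[OF X y[unfolded in_Y_def]] by blast
  interpret ctx a b B Bb C \<mu>
  proof
    show "b n \<le> Bb" for n using Bb[of n] by simp
  qed (use a_pos a_dec b_pos pi_conv B C ph in auto)
  have "(\<lambda>m. Pm n m * P_op a y m) sums y n" by (rule main[OF Z])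
  then show "(\<lambda>m. a m * pi_seq a m * P_op a y m / (a n + a m)) sums y n"
    by (simp add: Pm_def)
qed

end
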